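(* Suppose a system $C=(1,c_2,c_3,c_4,c_5,c_6)$ is canonical and its subsystem $(1,c_2,c_3,c_4,c_5)$ is noncanonical. Then $c_6$ is equal to $2c_5-c_2$, $2c_5-c_3$, or $2c_5-c_4$.
   Context: A system is a tuple $C=(c_1,\dots,c_n)$ of integers with $1=c_1<c_2<\dots<c_n$; for $k\le n$, $(c_1,\dots,c_k)$ is a subsystem. For a positive integer $v$, $\mathrm{opt}_C(v)$ is the minimum of $\sum_i x_i$ over $x\in\mathbb{Z}_{\ge0}^n$ with $\sum_i c_ix_i=v$. The greedy representation of $v$ is produced by: for $i=n$ down to $1$, while $c_i\le$ remaining value, take a coin $c_i$. $\mathrm{grd}_C(v)$ is its number of coins. A positive integer $w$ is a counterexample if $\mathrm{opt}_C(w)<\mathrm{grd}_C(w)$; $C$ is canonical if it has none, noncanonical otherwise. *)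

theory Defs
  imports Main
begin

definition is_system :: "nat list \<Rightarrow> bool" where
  "is_system C \<longleftrightarrow> C \<noteq> [] \<and> C ! 0 = 1 \<and> sorted_wrt (<) C"

definition representations :: "nat list \<Rightarrow> nat \<Rightarrow> (nat \<Rightarrow> nat) set" where
  "representations C v = {x. (\<Sum>i<length C. C ! i * x i) = v}"

definition opt :: "nat list \<Rightarrow> nat \<Rightarrow> nat" where
  "opt C v = (LEAST k. \<exists>x \<in> representations C v. (\<Sum>i<length C. x i) = k)"

text \<open>The argument of grd_aux is the list of coins in decreasing order.\<close>

fun grd_aux :: "nat list \<Rightarrow> nat \<Rightarrow> nat" where
  "grd_aux [] v = 0"
| "grd_aux (c # cs) v = (if c = 0 then grd_aux cs v else v div c + grd_aux cs (v mod c))"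

definition grd :: "nat list \<Rightarrow> nat \<Rightarrow> nat" where
  "grd C v = grd_aux (rev C) v"

definition counterexample :: "nat list \<Rightarrow> nat \<Rightarrow> bool" where
  "counterexample C w \<longleftrightarrow> 0 < w \<and> opt C w < grd C w"

definition canonical :: "nat list \<Rightarrow> bool" where
  "canonical C \<longleftrightarrow> (\<forall>w. \<not> counterexample C w)"

end

theory Submission
  imports Defs
begin

definition sysl :: "nat list \<Rightarrow> bool" where
  "sysl C \<longleftrightarrow> C \<noteq> [] \<and> C ! 0 = 1 \<and> (\<forall>c\<in>set C. 0 < c)"

lemma reps_nonempty:
  assumes "C \<noteq> []" "C ! 0 = 1"
  shows "(\<lambda>k. if k = 0 then v else 0) \<in> representations C v"
proof -
  have "(\<Sum>i<length C. C ! i * (if i = 0 then v else 0)) = (\<Sum>i<length C. if i = 0 then C ! 0 * v else 0)"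
    by (rule sum.cong) auto
  also have "\<dots> = C ! 0 * v" using assms by (simp add: sum.delta)
  finally show ?thesis using assms by (simp add: representations_def)
qed

lemma opt_attained:
  assumes "C \<noteq> []" "C ! 0 = 1"
  shows "\<exists>x\<in>representations C v. (\<Sum>i<length C. x i) = opt C v"
  unfolding opt_def
  by (rule LeastI_ex) (use reps_nonempty[OF assms] in blast)

lemma opt_le:
  assumes "x \<in> representations C v"
  shows "opt C v \<le> (\<Sum>i<length C. x i)"
  unfolding opt_def by (rule Least_le) (use assms in blast)

lemma opt_add_coin:
  assumes "C \<noteq> []" "C ! 0 = 1" "i < length C"
  shows "opt C (v + C ! i) \<le> opt C v + 1"
proof -
  obtain x where x: "x \<in> representations C v" "(\<Sum>i<length C. x i) = opt C v"
    using opt_attained[OF assms(1,2)] by blast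
  define y where "y = (\<lambda>k. x k + (if k = i then 1 else 0))"
  have "(\<Sum>k<length C. C ! k * y k) = (\<Sum>k<length C. C ! k * x k + (if k = i then C ! i else 0))"
    unfolding y_def by (rule sum.cong) auto
  also have "\<dots> = (\<Sum>k<length C. C ! k * x k) + (\<Sum>k<length C. if k = i then C ! i else 0)"
    by (rule sum.distrib)
  also have "\<dots> = v + C ! i" using x(1) assms(3) by (simp add: representations_def sum.delta)
  finally have "y \<in> representations C (v + C ! i)" by (simp add: representations_def)
  moreover have "(\<Sum>k<length C. y k) = opt C v + 1"
    unfolding y_def using x(2) assms(3) by (simp add: sum.distrib sum.delta)
  ultimately show ?thesis using opt_le by metis
qed

lemma opt_remove_coin:
  assumes "x \<in> representations C v" "(\<Sum>i<length C. x i) = opt C v" "i < length C" "0 < x i"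
  shows "opt C (v - C ! i) + 1 \<le> opt C v"
proof -
  define y where "y = (\<lambda>k. x k - (if k = i then 1 else 0))"
  have xy: "x k = y k + (if k = i then 1 else 0)" for k
    unfolding y_def using assms(4) by auto
  have "v = (\<Sum>k<length C. C ! k * x k)" using assms(1) by (simp add: representations_def)
  also have "\<dots> = (\<Sum>k<length C. C ! k * y k) + (\<Sum>k<length C. if k = i then C ! i else 0)"
    by (subst sum.distrib[symmetric], rule sum.cong) (auto simp: xy)
  also have "\<dots> = (\<Sum>k<length C. C ! k * y k) + C ! i" using assms(3) by (simp add: sum.delta)
  finally have "y \<in> representations C (v - C ! i)" by (simp add: representations_def)
  moreover have "(\<Sum>k<length C. x k) = (\<Sum>k<length C. y k) + 1"
    by (subst xy) (use assms(3) in \<open>simp add: sum.distrib sum.delta\<close>)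
  ultimately show ?thesis using opt_le[of y C "v - C ! i"] assms(2) by linarith
qed

lemma grd_snoc: "grd (D @ [c]) v = (if c = 0 then grd D v else v div c + grd D (v mod c))"
  by (simp add: grd_def)

lemma sum_snoc_eq:
  "(\<Sum>i<length (D @ [c]). (D @ [c]) ! i * x i) = (\<Sum>i<length D. D ! i * x i) + c * x (length D)"
  by (simp add: nth_append)

lemma grd_rep:
  assumes "sysl C"
  shows "\<exists>x\<in>representations C v. (\<Sum>i<length C. x i) = grd C v"
  using assms
proof (induction C arbitrary: v rule: rev_induct)
  case Nil then show ?case by (simp add: sysl_def)
next
  case (snoc c D)
  show ?case
  proof (cases "D = []")
    case True
    then have c1: "c = 1" using snoc.prems by (simp add: sysl_def)
    show ?thesis using True c1
      by (intro bexI[of _ "\<lambda>_. v"]) (simp_all add: representations_def grd_def)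
  next
    case False
    have sD: "sysl D" using snoc.prems False by (simp add: sysl_def nth_append)
    have c0: "c > 0" using snoc.prems by (simp add: sysl_def)
    obtain x where x: "x \<in> representations D (v mod c)" "(\<Sum>i<length D. x i) = grd D (v mod c)"
      using snoc.IH[OF sD] by blast
    define y where "y = x(length D := v div c)"
    have "(\<Sum>i<length D. D ! i * y i) = (\<Sum>i<length D. D ! i * x i)"
      unfolding y_def by (rule sum.cong) auto
    moreover have "(\<Sum>i<length D. y i) = (\<Sum>i<length D. x i)"
      unfolding y_def by (rule sum.cong) auto
    ultimately show ?thesis using x c0
      by (intro bexI[of _ y]) (unfold representations_def mem_Collect_eq sum_snoc_eq, simp_all add: grd_snoc, simp_all add: y_def)
  qed
qed

lemma opt_le_grd: "sysl C \<Longrightarrow> opt C v \<le> grd C v"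
  using grd_rep opt_le by metis

lemma opt_snoc_le:
  assumes "D \<noteq> []" "D ! 0 = 1"
  shows "opt (D @ [c]) v \<le> opt D v"
proof -
  obtain x where x: "x \<in> representations D v" "(\<Sum>i<length D. x i) = opt D v"
    using opt_attained[OF assms] by blast
  define y where "y = x(length D := 0)"
  have "(\<Sum>i<length D. D ! i * y i) = (\<Sum>i<length D. D ! i * x i)"
    unfolding y_def by (rule sum.cong) auto
  moreover have "(\<Sum>i<length D. y i) = (\<Sum>i<length D. x i)"
    unfolding y_def by (rule sum.cong) auto
  ultimately have "y \<in> representations (D @ [c]) v" "(\<Sum>i<length (D @ [c]). y i) = opt D v"
    using x by (unfold representations_def mem_Collect_eq sum_snoc_eq, simp_all add: y_def)
  then show ?thesis using opt_le by metis
qed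

lemma grd_le1:
  assumes "sysl C" "grd C v \<le> 1" "0 < v"
  shows "v \<in> set C"
proof -
  obtain x where x: "x \<in> representations C v" "(\<Sum>i<length C. x i) = grd C v"
    using grd_rep[OF assms(1)] by blast
  have "(\<Sum>i<length C. x i) \<noteq> 0"
  proof
    assume "(\<Sum>i<length C. x i) = 0"
    then have "\<forall>i<length C. x i = 0" by simp
    then have "(\<Sum>i<length C. C ! i * x i) = 0" by (intro sum.neutral) auto
    moreover have "v = (\<Sum>i<length C. C ! i * x i)" using x(1) by (simp add: representations_def)
    ultimately show False using assms(3) by linarith
  qed
  then obtain i where i: "i < length C" "x i \<noteq> 0" by (meson lessThan_iff sum.neutral)
  have s1: "(\<Sum>i<length C. x i) = 1" using x(2) assms(2) \<open>(\<Sum>i<length C. x i) \<noteq> 0\<close> by simp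
  have "(\<Sum>k<length C. x k) = x i + (\<Sum>k\<in>{..<length C} - {i}. x k)"
    using i(1) by (simp add: sum.remove)
  then have xi: "x i = 1" and rest: "(\<Sum>k\<in>{..<length C} - {i}. x k) = 0" using s1 i(2) by linarith+
  have rest0: "\<forall>k\<in>{..<length C} - {i}. x k = 0" using rest by simp
  have "v = (\<Sum>k<length C. C ! k * x k)" using x(1) by (simp add: representations_def)
  also have "\<dots> = C ! i * x i + (\<Sum>k\<in>{..<length C} - {i}. C ! k * x k)"
    using i(1) by (simp add: sum.remove)
  also have "\<dots> = C ! i" using xi rest0 by simp
  finally show ?thesis using i(1) by simp
qed

lemma grd_step:
  assumes "0 < c" "c \<le> v"
  shows "grd (D @ [c]) v = 1 + grd (D @ [c]) (v - c)"
proof -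
  have "v div c = Suc ((v - c) div c)" using assms by (simp add: le_div_geq)
  moreover have "v mod c = (v - c) mod c" using assms by (simp add: le_mod_geq)
  ultimately show ?thesis using assms by (simp add: grd_snoc)
qed

lemma opt_zero: "opt C 0 = 0"
proof -
  have "(\<lambda>_. 0) \<in> representations C 0" by (simp add: representations_def)
  from opt_le[OF this] show ?thesis by simp
qed

theorem lemma5:
  fixes c2 c3 c4 c5 c6 :: nat
  assumes "is_system [1, c2, c3, c4, c5, c6]"
    and "canonical [1, c2, c3, c4, c5, c6]"
    and "\<not> canonical [1, c2, c3, c4, c5]"
  shows "c6 = 2 * c5 - c2 \<or> c6 = 2 * c5 - c3 \<or> c6 = 2 * c5 - c4"
proof -
  have ord: "1 < c2" "c2 < c3" "c3 < c4" "c4 < c5" "c5 < c6"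
    using assms(1) by (simp_all add: is_system_def)
  define D where "D = [1, c2, c3, c4]"
  define C' where "C' = D @ [c5]"
  have eC': "[1, c2, c3, c4, c5] = C'" by (simp add: C'_def D_def)
  have eC: "[1, c2, c3, c4, c5, c6] = C' @ [c6]" by (simp add: C'_def D_def)
  have canC: "\<And>v. \<not> counterexample (C' @ [c6]) v" using assms(2) unfolding eC canonical_def by blast
  have sC': "sysl C'" using ord by (auto simp: sysl_def C'_def D_def)
  have sC: "sysl (C' @ [c6])" using ord by (auto simp: sysl_def C'_def D_def)
  have C'ne: "C' \<noteq> []" "C' ! 0 = 1" by (simp_all add: C'_def D_def)
  have lenC': "length C' = 5" by (simp add: C'_def D_def)
  have C'4: "C' ! 4 = c5" by (simp add: C'_def D_def)
  have C'j: "C' ! j \<le> c4" if "j < 4" for j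
  proof -
    have "j = 0 \<or> j = 1 \<or> j = 2 \<or> j = 3" using that by linarith
    then show ?thesis using ord by (auto simp: C'_def D_def)
  qed
  obtain w0 where "counterexample C' w0" using assms(3) eC' by (auto simp: canonical_def)
  define w where "w = (LEAST w. counterexample C' w)"
  have wce: "counterexample C' w" unfolding w_def by (rule LeastI) fact
  have wmin: "\<And>v. v < w \<Longrightarrow> \<not> counterexample C' v" unfolding w_def by (rule not_less_Least)
  have nce: "grd C' v \<le> opt C' v" if "0 < v" "v < w" for v
    using wmin[OF that(2)] that(1) by (simp add: counterexample_def)
  have w0: "0 < w" "opt C' w < grd C' w" using wce by (simp_all add: counterexample_def)
  have wc6: "c6 \<le> w"
  proof (rule ccontr)
    assume "\<not> c6 \<le> w"
    then have "w < c6" by simp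
    then have "grd (C' @ [c6]) w = grd C' w" using ord by (simp add: grd_snoc)
    moreover have "opt (C' @ [c6]) w \<le> opt C' w" by (rule opt_snoc_le[OF C'ne])
    ultimately have "counterexample (C' @ [c6]) w" using w0 by (simp add: counterexample_def)
    then show False using canC by blast
  qed
  have wlt: "w < c4 + c5"
  proof (rule ccontr)
    assume "\<not> w < c4 + c5"
    then have wge: "c4 + c5 \<le> w" by simp
    obtain x where x: "x \<in> representations C' w" "(\<Sum>i<length C'. x i) = opt C' w"
      using opt_attained[OF C'ne] by blast
    have key: "opt C' (w - c5) + 1 \<le> opt C' w"
    proof (cases "0 < x 4")
      case True
      then show ?thesis using opt_remove_coin[OF x, of 4] lenC' C'4 by simp
    next
      case False
      have "\<exists>j<4. 0 < x j"
      proof (rule ccontr)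
        assume "\<not> (\<exists>j<4. 0 < x j)"
        note nj = this
        have "x j = 0" if "j < length C'" for j
        proof (cases "j < 4")
          case True
          then show ?thesis using nj by auto
        next
          case nt: False
          then have "j = 4" using that lenC' by simp
          then show ?thesis using \<open>\<not> 0 < x 4\<close> by simp
        qed
        then have "\<forall>j<length C'. x j = 0" by blast
        then have "(\<Sum>i<length C'. C' ! i * x i) = 0" by (intro sum.neutral) auto
        moreover have "w = (\<Sum>i<length C'. C' ! i * x i)" using x(1) by (simp add: representations_def)
        ultimately show False using w0 by linarith
      qed
      then obtain j where j: "j < 4" "0 < x j" by blast
      have cj: "C' ! j \<le> c4" using C'j j(1) by blast
      have cjpos: "0 < C' ! j" using sC' j(1) lenC' by (simp add: sysl_def)
      have a1: "opt C' (w - C' ! j) + 1 \<le> opt C' w"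
        using opt_remove_coin[OF x, of j] j lenC' by simp
      have a2: "grd C' (w - C' ! j) \<le> opt C' (w - C' ! j)"
        using nce[of "w - C' ! j"] cj cjpos wge ord by simp
      have a3: "grd C' (w - C' ! j) = 1 + grd C' (w - C' ! j - c5)"
        using grd_step[of c5 "w - C' ! j" D] cj wge ord unfolding C'_def[symmetric] by simp
      have a4: "opt C' (w - C' ! j - c5) \<le> grd C' (w - C' ! j - c5)" by (rule opt_le_grd[OF sC'])
      have a5: "opt C' (w - C' ! j - c5 + C' ! j) \<le> opt C' (w - C' ! j - c5) + 1"
        by (rule opt_add_coin[OF C'ne]) (use j lenC' in simp)
      have "w - C' ! j - c5 + C' ! j = w - c5" using cj wge by simp
      then show ?thesis using a1 a2 a3 a4 a5 by simp
    qed
    have "grd C' w = 1 + grd C' (w - c5)"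
      using grd_step[of c5 w D] wge ord unfolding C'_def[symmetric] by simp
    moreover have "grd C' (w - c5) \<le> opt C' (w - c5)" using nce[of "w - c5"] wge ord by simp
    ultimately show False using key w0 by simp
  qed
  have lt: "c6 < c4 + c5" using wc6 wlt by simp
  define r where "r = 2 * c5 - c6"
  have r: "0 < r" "r < c5" "2 * c5 = c6 + r" using lt ord by (simp_all add: r_def)
  have "2 * c5 div c6 = 1" using r ord by (simp add: div_nat_eqI)
  moreover have "2 * c5 mod c6 = r" using r ord by (simp add: mod_if le_mod_geq)
  ultimately have g: "grd (C' @ [c6]) (2 * c5) = 1 + grd C' r" using ord by (simp add: grd_snoc)
  have C4: "(C' @ [c6]) ! 4 = c5" "4 < length (C' @ [c6])" by (simp_all add: C'_def D_def)
  have "opt (C' @ [c6]) (0 + (C' @ [c6]) ! 4) \<le> opt (C' @ [c6]) 0 + 1"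
    by (rule opt_add_coin) (use C4 in \<open>simp_all add: C'_def D_def\<close>)
  moreover have "opt (C' @ [c6]) (c5 + (C' @ [c6]) ! 4) \<le> opt (C' @ [c6]) c5 + 1"
    by (rule opt_add_coin) (use C4 in \<open>simp_all add: C'_def D_def\<close>)
  ultimately have "opt (C' @ [c6]) (2 * c5) \<le> 2" using C4 by (simp add: opt_zero mult_2)
  moreover have "grd (C' @ [c6]) (2 * c5) \<le> opt (C' @ [c6]) (2 * c5)"
    using canC[of "2 * c5"] ord by (simp add: counterexample_def)
  ultimately have "grd C' r \<le> 1" using g by simp
  then have "r \<in> set C'" using grd_le1[OF sC'] r(1) by blast
  then have "r = 1 \<or> r = c2 \<or> r = c3 \<or> r = c4 \<or> r = c5" by (simp add: C'_def D_def)
  moreover have "r \<noteq> 1" using r lt ord by linarith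
  ultimately show ?thesis using r by auto
qed

end
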